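(* Let $\lambda\in(0,1]$, $p$ a polynomial of degree $d\ge1$ with nonnegative real roots and largest root $R$. Then the function $\mathcal H(x)=\mathcal G(x)\big(\lambda\mathcal G(x)+\frac{1-\lambda}{x}\big)$, with $\mathcal G(x)=\frac1d\frac{xp'(x^2)}{p(x^2)}$, is a bijection from $(\sqrt R,+\infty)$ onto $(0,+\infty)$.
   Context: $\mathcal G$ is the Cauchy transform $\int\frac{d\mu(t)}{x-t}$ of the uniform measure $\mu$ on the $2d$ roots of $p(x^2)$, and $\mathcal H$ is the $\lambda$-rectangular Cauchy transform of $p(x^2)$. *)

theory Defs
  imports "HOL-Analysis.Analysis" "HOL-Computational_Algebra.Polynomial"
begin

text \<open>Cauchy transform of the uniform measure on the 2d roots of p(x^2):
  G(x) = (1/d) * x * p'(x^2) / p(x^2), where d = degree p.\<close>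
definition cauchyG :: "real poly \<Rightarrow> real \<Rightarrow> real" where
  "cauchyG p x = (1 / real (degree p)) * (x * poly (pderiv p) (x\<^sup>2) / poly p (x\<^sup>2))"

definition rectH :: "real \<Rightarrow> real poly \<Rightarrow> real \<Rightarrow> real" where
  "rectH lam p x = cauchyG p x * (lam * cauchyG p x + (1 - lam) / x)"

definition nonneg_real_rooted :: "real poly \<Rightarrow> bool" where
  "nonneg_real_rooted p \<longleftrightarrow>
     (\<forall>z::complex. poly (map_poly complex_of_real p) z = 0 \<longrightarrow> z \<in> \<real> \<and> 0 \<le> Re z)"

end

theory Submission
  imports Defs "HOL-Computational_Algebra.Fundamental_Theorem_Algebra"
begin

lemma mp_mult: "map_poly (of_real::real\<Rightarrow>complex) (a*b) = map_poly of_real a * map_poly of_real b"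
  by (rule poly_eqI) (simp add: coeff_map_poly coeff_mult)

lemma mp_poly: "poly (map_poly (of_real::real\<Rightarrow>complex) p) (of_real x) = of_real (poly p x)"
  by (induction p) (auto simp: map_poly_pCons)

lemma factor_real:
  fixes p :: "real poly"
  assumes "nonneg_real_rooted p" "p \<noteq> 0"
  shows "\<exists>c xs. c \<noteq> 0 \<and> p = smult c (prod_list (map (\<lambda>r. [:-r,1:]) xs))
            \<and> length xs = degree p \<and> (\<forall>r\<in>set xs. 0 \<le> r)"
  using assms
proof (induction "degree p" arbitrary: p)
  case 0
  then obtain c where "p = [:c:]" by (metis degree_eq_zeroE)
  with 0 show ?case by (intro exI[of _ c] exI[of _ "[]"]) auto
next
  case (Suc n)
  let ?P = "map_poly (of_real::real\<Rightarrow>complex) p"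
  have "degree ?P = Suc n" using Suc(2) by (simp add: degree_map_poly)
  then have "\<not> constant (poly ?P)" by (simp add: constant_degree)
  then obtain z where z: "poly ?P z = 0" using fundamental_theorem_of_algebra by blast
  with Suc(3) have zr: "z \<in> \<real>" "0 \<le> Re z" unfolding nonneg_real_rooted_def by auto
  define r where "r = Re z"
  have zeq: "z = of_real r" using zr r_def by (metis Reals_cases complex.sel(1) Re_complex_of_real)
  have "poly p r = 0" using z mp_poly[of p r] zeq by simp
  then have "[:-r,1:] dvd p" by (simp add: poly_eq_0_iff_dvd)
  then obtain q where pq: "p = [:-r,1:] * q" by (rule dvdE)
  have q0: "q \<noteq> 0" using Suc(4) pq by auto
  have "degree p = degree [:-r,1::real:] + degree q" unfolding pq using q0 by (intro degree_mult_eq) auto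
  then have dq: "degree q = n" using Suc(2) by simp
  have "nonneg_real_rooted q" unfolding nonneg_real_rooted_def
  proof (intro allI impI)
    fix w :: complex assume "poly (map_poly of_real q) w = 0"
    then have "poly ?P w = 0" unfolding pq mp_mult by simp
    then show "w \<in> \<real> \<and> 0 \<le> Re w" using Suc(3) unfolding nonneg_real_rooted_def by blast
  qed
  from Suc(1)[OF dq[symmetric] this q0] obtain c xs where
    h: "c \<noteq> 0" "q = smult c (prod_list (map (\<lambda>r. [:-r,1:]) xs))" "length xs = degree q" "\<forall>r\<in>set xs. 0 \<le> r"
    by blast
  show ?case
    apply (intro exI[of _ c] exI[of _ "r # xs"])
    using h pq zr r_def dq Suc(2) by (auto simp: mult_smult_right)
qed

lemma logderiv:
  fixes y :: real
  assumes "\<forall>r\<in>set xs. y \<noteq> r"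
  shows "poly (pderiv (prod_list (map (\<lambda>r. [:-r,1:]) xs))) y
       = poly (prod_list (map (\<lambda>r. [:-r,1:]) xs)) y * (\<Sum>r\<leftarrow>xs. 1/(y-r))"
  using assms
proof (induction xs)
  case Nil then show ?case by simp
next
  case (Cons a xs)
  then have ya: "y - a \<noteq> 0" by auto
  define Q where "Q = prod_list (map (\<lambda>r. [:-r,1:]) xs)"
  have pd: "pderiv [:-a,1:] = (1::real poly)" by (simp add: pderiv_pCons)
  have "pderiv ([:-a,1:] * Q) = [:-a,1:] * pderiv Q + Q" by (simp only: pderiv_mult pd mult_1_right)
  then have "poly (pderiv ([:-a,1:] * Q)) y = poly ([:-a,1:] * pderiv Q + Q) y" by (simp only:)
  also have "\<dots> = (y - a) * poly (pderiv Q) y + poly Q y" by (simp add: algebra_simps)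
  also have "\<dots> = (y - a) * poly Q y * (1/(y-a) + (\<Sum>r\<leftarrow>xs. 1/(y-r)))"
    using Cons ya unfolding Q_def by (simp add: field_simps)
  finally show ?case unfolding Q_def by (simp add: algebra_simps)
qed

lemma poly_prodlist: "poly (prod_list (map (\<lambda>r. [:-r,1:]) xs)) (y::real) = prod_list (map (\<lambda>r. y - r) xs)"
  by (induction xs) (auto simp: o_def algebra_simps)

lemma sum_list_strict:
  fixes f g :: "real \<Rightarrow> real"
  assumes "xs \<noteq> []" "\<forall>r\<in>set xs. f r < g r"
  shows "(\<Sum>r\<leftarrow>xs. f r) < (\<Sum>r\<leftarrow>xs. g r)"
  using assms
proof (induction xs)
  case Nil then show ?case by simp
next
  case (Cons a xs)
  have "(\<Sum>r\<leftarrow>xs. f r) \<le> (\<Sum>r\<leftarrow>xs. g r)" using Cons.prems by (intro sum_list_mono) auto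
  with Cons.prems show ?case by (simp add: add_less_le_mono)
qed

lemma sum_list_ge_member:
  fixes f :: "real \<Rightarrow> real"
  assumes "a \<in> set xs" "\<forall>r\<in>set xs. 0 \<le> f r"
  shows "f a \<le> (\<Sum>r\<leftarrow>xs. f r)"
  using assms
proof (induction xs)
  case Nil then show ?case by simp
next
  case (Cons b xs)
  have "0 \<le> (\<Sum>r\<leftarrow>xs. f r)" using Cons.prems by (intro sum_list_nonneg) auto
  with Cons show ?case by auto
qed

lemma sum_list_mult: "x * (\<Sum>r\<leftarrow>xs. 1/(y-r)) = (\<Sum>r\<leftarrow>xs. x/(y-r::real))"
  by (induction xs) (auto simp: algebra_simps)


theorem mainTheorem16:
  fixes lam :: real and p :: "real poly" and R :: real
  assumes "0 < lam" and "lam \<le> 1"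
    and "degree p \<ge> 1"
    and "nonneg_real_rooted p"
    and "R = Max {r. poly p r = 0}"
  shows "bij_betw (rectH lam p) {sqrt R<..} {0<..}"
proof -
  define d where "d = degree p"
  have p0: "p \<noteq> 0" using assms(3) by auto
  obtain c xs where cx: "c \<noteq> 0" "p = smult c (prod_list (map (\<lambda>r. [:-r,1:]) xs))"
     "length xs = d" "\<forall>r\<in>set xs. 0 \<le> r"
    using factor_real[OF assms(4) p0] d_def by blast
  have xsne: "xs \<noteq> []" using cx(3) assms(3) d_def by auto
  have dpos: "real d > 0" using assms(3) d_def by simp
  have polyp: "poly p y = c * prod_list (map (\<lambda>r. y - r) xs)" for y
    using cx(2) by (simp add: poly_prodlist)
  have roots: "{r. poly p r = 0} = set xs"
    using cx(1) by (auto simp: polyp prod_list_zero_iff)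
  have Rmem: "R \<in> set xs" using assms(5) roots xsne by simp
  have Rge: "\<forall>r\<in>set xs. r \<le> R" using assms(5) roots by simp
  have R0: "0 \<le> R" using Rmem cx(4) by auto
  define s where "s = sqrt R"
  have s0: "0 \<le> s" and ss: "s * s = R" using R0 by (auto simp: s_def)
  define G where "G x = (1 / real d) * (\<Sum>r\<leftarrow>xs. x/(x\<^sup>2 - r))" for x
  have xR: "x\<^sup>2 > R" if "x > s" for x
  proof -
    have "s * s < x * x" using that s0 by (intro mult_strict_mono) auto
    then show ?thesis using ss by (simp add: power2_eq_square)
  qed
  have Geq: "cauchyG p x = G x" if "x > s" for x
  proof -
    have ne: "\<forall>r\<in>set xs. x\<^sup>2 \<noteq> r" using xR[OF that] Rge by force
    have pq: "poly (prod_list (map (\<lambda>r. [:-r,1:]) xs)) (x\<^sup>2) \<noteq> 0"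
      using ne by (auto simp: poly_prodlist prod_list_zero_iff)
    have "cauchyG p x = (1 / real d) * (x * (c * (poly (prod_list (map (\<lambda>r. [:-r,1:]) xs)) (x\<^sup>2)
        * (\<Sum>r\<leftarrow>xs. 1/(x\<^sup>2-r)))) / (c * poly (prod_list (map (\<lambda>r. [:-r,1:]) xs)) (x\<^sup>2)))"
      unfolding cauchyG_def d_def using logderiv[OF ne] cx(2) by (simp add: pderiv_smult)
    also have "\<dots> = (1 / real d) * (x * (\<Sum>r\<leftarrow>xs. 1/(x\<^sup>2-r)))"
      using pq cx(1) by simp
    finally show ?thesis unfolding G_def sum_list_mult .
  qed
  have Hformula: "rectH lam p x = G x * (lam * G x + (1 - lam) / x)" if "x > s" for x
    unfolding rectH_def Geq[OF that] ..
  have termpos: "x/(x\<^sup>2 - r) > 0" if "x > s" "r \<in> set xs" for x r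
    using xR[OF that(1)] Rge that s0 by force
  have Gpos: "G x > 0" if "x > s" for x
  proof -
    have "0 < (\<Sum>r\<leftarrow>xs. x/(x\<^sup>2 - r))"
      using sum_list_strict[OF xsne, of "\<lambda>_. 0"] termpos[OF that] by simp
    then show ?thesis unfolding G_def using dpos by simp
  qed
  have Gmono: "G y < G x" if "s < x" "x < y" for x y
  proof -
    have "y/(y\<^sup>2 - r) < x/(x\<^sup>2 - r)" if "r \<in> set xs" for r
    proof -
      have "x\<^sup>2 > R" "y\<^sup>2 > R" using xR \<open>s<x\<close> \<open>x<y\<close> by auto
      then have a: "x\<^sup>2 - r > 0" "y\<^sup>2 - r > 0" using Rge that by force+
      have r0: "r \<ge> 0" using cx(4) that by auto
      have "y * (x\<^sup>2 - r) < x * (y\<^sup>2 - r)"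
      proof -
        have "x*y*(y-x) + r*(y-x) > 0" using \<open>s<x\<close> \<open>x<y\<close> s0 r0
          by (intro add_pos_nonneg) auto
        then show ?thesis by (simp add: power2_eq_square algebra_simps)
      qed
      then show ?thesis using a by (simp add: field_simps)
    qed
    then have "(\<Sum>r\<leftarrow>xs. y/(y\<^sup>2 - r)) < (\<Sum>r\<leftarrow>xs. x/(x\<^sup>2 - r))"
      by (intro sum_list_strict xsne) auto
    then show ?thesis unfolding G_def using dpos by (simp add: divide_strict_right_mono)
  qed
  have Glow: "G x \<ge> 1 / (2 * real d * (x - s))" if "x > s" for x
  proof -
    have "x\<^sup>2 - R = (x - s) * (x + s)" using ss by (simp add: power2_eq_square algebra_simps)
    then have e: "x / (x\<^sup>2 - R) = (1/(x-s)) * (x/(x+s))" by (simp add: divide_simps)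
    have h: "1/2 \<le> x/(x+s)" using that s0 by (simp add: field_simps)
    have "1 / (2 * (x - s)) = (1/(x-s)) * (1/2)" by simp
    also have "\<dots> \<le> (1/(x-s)) * (x/(x+s))" using h that by (intro mult_left_mono) auto
    also have "\<dots> = x / (x\<^sup>2 - R)" by (rule e[symmetric])
    finally have "1 / (2 * (x - s)) \<le> x / (x\<^sup>2 - R)" .
    also have "\<dots> \<le> (\<Sum>r\<leftarrow>xs. x/(x\<^sup>2 - r))"
      using sum_list_ge_member[OF Rmem, of "\<lambda>r. x/(x\<^sup>2 - r)"] termpos[OF that] by (simp add: less_imp_le)
    finally have "(1/real d) * (1 / (2 * (x - s))) \<le> (1/real d) * (\<Sum>r\<leftarrow>xs. x/(x\<^sup>2 - r))"
      by (intro mult_left_mono) auto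
    moreover have "(1/real d) * (1 / (2 * (x - s))) = 1 / (2 * real d * (x - s))" by simp
    ultimately show ?thesis unfolding G_def by linarith
  qed
  have Gup: "G x \<le> 2 / x" if "x > s" "x\<^sup>2 \<ge> 2 * R" for x
  proof -
    have "x/(x\<^sup>2 - r) \<le> 2 / x" if "r \<in> set xs" for r
    proof -
      have a: "x\<^sup>2 - r \<ge> x\<^sup>2 / 2" using Rge that \<open>x\<^sup>2 \<ge> 2 * R\<close> by force
      have "x > 0" using \<open>x > s\<close> s0 by simp
      have "x/(x\<^sup>2 - r) \<le> x / (x\<^sup>2/2)"
      proof (rule divide_left_mono)
        have "x\<^sup>2 - r > 0" using xR[OF \<open>x > s\<close>] Rge \<open>r \<in> set xs\<close> by force
        then show "0 < (x\<^sup>2 - r) * (x\<^sup>2 / 2)" using \<open>x>0\<close> by simp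
      qed (use a \<open>x>0\<close> in auto)
      also have "\<dots> = 2 / x" using \<open>x>0\<close> by (simp add: power2_eq_square)
      finally show ?thesis .
    qed
    then have "(\<Sum>r\<leftarrow>xs. x/(x\<^sup>2 - r)) \<le> (\<Sum>r\<leftarrow>xs. 2 / x)" by (intro sum_list_mono) auto
    also have "\<dots> = real d * (2 / x)" using cx(3) by (simp add: sum_list_triv)
    finally show ?thesis unfolding G_def using dpos by (simp add: field_simps)
  qed
  define H where "H = rectH lam p"
  have Hpos: "H x > 0" if "x > s" for x
  proof -
    have "x > 0" using that s0 by simp
    have "lam * G x + (1 - lam) / x > 0"
      using Gpos[OF that] assms(1,2) \<open>x>0\<close> by (intro add_pos_nonneg) auto
    then show ?thesis unfolding H_def Hformula[OF that] using Gpos[OF that] by simp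
  qed
  have Hmono: "H y < H x" if "s < x" "x < y" for x y
  proof -
    have xy: "s < y" using that by simp
    have "x > 0" using that s0 by simp
    have g: "G y < G x" "0 < G y" using Gmono[OF that] Gpos[OF xy] by auto
    have "(1 - lam) / y \<le> (1 - lam) / x" using assms(2) \<open>x>0\<close> that
      by (intro divide_left_mono) auto
    moreover have "lam * G y < lam * G x" using g assms(1) by simp
    ultimately have b: "lam * G y + (1 - lam) / y < lam * G x + (1 - lam) / x" by linarith
    have "0 \<le> lam * G y + (1 - lam) / y" using g assms(1,2) xy s0
      by (intro add_nonneg_nonneg) auto
    then have "G y * (lam * G y + (1 - lam) / y) < G x * (lam * G x + (1 - lam) / x)"
      using g b by (intro mult_strict_mono) auto
    then show ?thesis unfolding H_def Hformula[OF that(1)] Hformula[OF xy] .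
  qed
  have inj: "inj_on H {s<..}"
  proof (rule inj_onI)
    fix x y assume "x \<in> {s<..}" "y \<in> {s<..}" "H x = H y"
    then show "x = y" using Hmono by (metis greaterThan_iff linorder_neqE_linordered_idom order_less_irrefl)
  qed
  have cont: "continuous_on {a..b} H" if "s < a" for a b
  proof -
    have "poly p (x\<^sup>2) \<noteq> 0" if "x \<in> {a..b}" for x
    proof
      assume "poly p (x\<^sup>2) = 0"
      then have "x\<^sup>2 \<in> set xs" using roots by auto
      then show False using Rge xR[of x] that \<open>s < a\<close> by force
    qed
    moreover have "x \<noteq> 0" if "x \<in> {a..b}" for x using that \<open>s<a\<close> s0 by auto
    ultimately show ?thesis unfolding H_def rectH_def cauchyG_def
      by (intro continuous_intros) auto
  qed
  have surj: "t \<in> H ` {s<..}" if "t > 0" for t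
  proof -
    define e where "e = sqrt (lam / (4 * (real d)\<^sup>2 * t)) / 2"
    have e0: "e > 0" unfolding e_def using assms(1) dpos that by simp
    have e2: "e\<^sup>2 = lam / (16 * (real d)\<^sup>2 * t)" unfolding e_def
      using assms(1) dpos that by (simp add: power_divide real_sqrt_pow2 field_simps)
    define x1 where "x1 = s + e"
    have x1s: "x1 > s" using e0 x1_def by simp
    have "H x1 \<ge> lam * (G x1)\<^sup>2"
    proof -
      have "0 \<le> G x1 * ((1 - lam) / x1)" using Gpos[OF x1s] assms(2) x1s s0 by simp
      then show ?thesis unfolding H_def Hformula[OF x1s] by (simp add: algebra_simps power2_eq_square)
    qed
    moreover have "(G x1)\<^sup>2 \<ge> (1 / (2 * real d * e))\<^sup>2"
      using Glow[OF x1s] x1_def e0 dpos by (intro power_mono) auto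
    moreover have "lam * (1 / (2 * real d * e))\<^sup>2 = 4 * t"
      using e2 dpos e0 assms(1) that by (simp add: power_divide power_mult_distrib field_simps)
    ultimately have h1: "H x1 \<ge> t" using assms(1) that
      by (smt (verit) mult_left_mono)
    define x2 where "x2 = x1 + sqrt (2 * R) + 2 / sqrt t"
    have q1: "sqrt (2 * R) \<ge> 0" "2 / sqrt t > 0" using R0 that by auto
    have x2s: "x2 > s" and x12: "x1 \<le> x2" unfolding x2_def using x1s q1 by linarith+
    have x2R: "x2\<^sup>2 \<ge> 2 * R"
    proof -
      have "sqrt (2*R) \<le> x2" unfolding x2_def using x1s s0 q1 by linarith
      then have "(sqrt (2*R))\<^sup>2 \<le> x2\<^sup>2" using R0 by (intro power_mono) auto
      then show ?thesis using R0 by simp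
    qed
    have x2t: "x2 > 2 / sqrt t" unfolding x2_def using x1s s0 q1 by linarith
    have "H x2 \<le> (2 / x2) * (2 / x2)"
    proof -
      have x2p: "x2 > 0" using x2s s0 by simp
      have g: "G x2 \<le> 2 / x2" "0 < G x2" using Gup[OF x2s x2R] Gpos[OF x2s] by auto
      have "lam * G x2 + (1 - lam) / x2 \<le> lam * (2 / x2) + (1 - lam) * (2 / x2)"
        using g assms(1,2) x2p by (intro add_mono mult_left_mono) (auto simp: divide_simps)
      also have "\<dots> = 2 / x2" by (simp add: add_divide_distrib[symmetric] algebra_simps)
      finally have "lam * G x2 + (1 - lam) / x2 \<le> 2 / x2" .
      moreover have "0 \<le> lam * G x2 + (1 - lam) / x2" using g assms(1,2) x2p
        by (intro add_nonneg_nonneg) auto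
      ultimately show ?thesis unfolding H_def Hformula[OF x2s] using g x2p
        by (intro mult_mono) auto
    qed
    also have "\<dots> < t"
    proof -
      have x2pp: "x2 > 0" using x2t q1 by linarith
      have "(2 / sqrt t) * (2 / sqrt t) < x2 * x2" using x2t that q1 x2pp
        by (intro mult_strict_mono) auto
      then have "4 / t < x2 * x2" using that by (simp add: real_sqrt_mult[symmetric])
      then show ?thesis using x2pp that by (simp add: field_simps)
    qed
    finally have h2: "H x2 \<le> t" by simp
    obtain x where "x1 \<le> x" "x \<le> x2" "H x = t"
      using IVT2'[of H x2 t x1, OF h2 h1 x12 cont[OF x1s]] by blast
    then show ?thesis using x1s by force
  qed
  have "H ` {s<..} = {0<..}" using Hpos surj by auto
  then show ?thesis using inj unfolding bij_betw_def H_def s_def by simp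
qed

end
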